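(* Suppose that $(A_1,B_1)$ and $(A_2,B_2)$ are pairs of Gram mates (that are not necessarily square matrices). Then, we have the following pairs of Gram mates: $$\left(\begin{bmatrix} A_1 & 0\\ 0 & A_2 \end{bmatrix},\begin{bmatrix} B_1 & 0\\ 0 & B_2 \end{bmatrix}\right)\;\text{and}\;\left(\begin{bmatrix} A_1 & J\\ J & A_2 \end{bmatrix},\begin{bmatrix} B_1 & J\\ J & B_2 \end{bmatrix}\right).$$
   Context: $J$ denotes the all-ones matrix of the appropriate size. Two $(0,1)$ matrices $A\neq B$ are Gram mates if $AA^T=BB^T$ and $A^TA=B^TB$. *)

theory Defs
  imports "Jordan_Normal_Form.Matrix"
begin

definition all_ones_mat :: "nat \<Rightarrow> nat \<Rightarrow> int mat" where
  "all_ones_mat n m = mat n m (\<lambda>_. 1)"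

definition zero_one_mat :: "int mat \<Rightarrow> bool" where
  "zero_one_mat A \<longleftrightarrow> (\<forall>i < dim_row A. \<forall>j < dim_col A. A $$ (i, j) \<in> {0, 1})"

definition gram_mates :: "int mat \<Rightarrow> int mat \<Rightarrow> bool" where
  "gram_mates A B \<longleftrightarrow>
     dim_row A = dim_row B \<and> dim_col A = dim_col B \<and>
     zero_one_mat A \<and> zero_one_mat B \<and> A \<noteq> B \<and>
     A * transpose_mat A = B * transpose_mat B \<and>
     transpose_mat A * A = transpose_mat B * B"

end

theory Submission
  imports Defs
begin

lemma zo_sq: "zero_one_mat A \<Longrightarrow> i < dim_row A \<Longrightarrow> j < dim_col A \<Longrightarrow> A $$ (i,j) * A $$ (i,j) = A $$ (i,j)"
  unfolding zero_one_mat_def by force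

lemma rowsum:
  assumes "zero_one_mat A" "i < dim_row A"
  shows "(A * transpose_mat A) $$ (i,i) = (\<Sum>k<dim_col A. A $$ (i,k))"
proof -
  have "(A * transpose_mat A) $$ (i,i) = (\<Sum>k<dim_col A. A $$ (i,k) * A $$ (i,k))"
    using assms by (simp add: scalar_prod_def lessThan_atLeast0 row_def col_def)
  also have "\<dots> = (\<Sum>k<dim_col A. A $$ (i,k))"
    using zo_sq[OF assms(1) assms(2)] by (intro sum.cong) auto
  finally show ?thesis .
qed

lemma colsum:
  assumes "zero_one_mat A" "j < dim_col A"
  shows "(transpose_mat A * A) $$ (j,j) = (\<Sum>k<dim_row A. A $$ (k,j))"
proof -
  have "(transpose_mat A * A) $$ (j,j) = (\<Sum>k<dim_row A. A $$ (k,j) * A $$ (k,j))"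
    using assms by (simp add: scalar_prod_def lessThan_atLeast0 row_def col_def)
  also have "\<dots> = (\<Sum>k<dim_row A. A $$ (k,j))"
    using zo_sq[OF assms(1) _ assms(2)] by (intro sum.cong) auto
  finally show ?thesis .
qed

lemma rows_J:
  assumes g: "gram_mates A B"
  shows "A * transpose_mat (all_ones_mat n (dim_col A)) = B * transpose_mat (all_ones_mat n (dim_col A))"
    and "transpose_mat A * all_ones_mat (dim_row A) n = transpose_mat B * all_ones_mat (dim_row A) n"
proof -
  from g have d: "dim_row A = dim_row B" "dim_col A = dim_col B" and z: "zero_one_mat A" "zero_one_mat B"
    and e1: "A * transpose_mat A = B * transpose_mat B" and e2: "transpose_mat A * A = transpose_mat B * B"
    unfolding gram_mates_def by auto
  have rs: "(\<Sum>k<dim_col A. A $$ (i,k)) = (\<Sum>k<dim_col A. B $$ (i,k))" if "i < dim_row A" for i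
    using rowsum[OF z(1) that] rowsum[OF z(2), of i] that d e1 by simp
  have cs: "(\<Sum>k<dim_row A. A $$ (k,j)) = (\<Sum>k<dim_row A. B $$ (k,j))" if "j < dim_col A" for j
    using colsum[OF z(1) that] colsum[OF z(2), of j] that d e2 by simp
  show "A * transpose_mat (all_ones_mat n (dim_col A)) = B * transpose_mat (all_ones_mat n (dim_col A))"
  proof (rule eq_matI)
    fix i j assume ij: "i < dim_row (B * transpose_mat (all_ones_mat n (dim_col A)))"
      "j < dim_col (B * transpose_mat (all_ones_mat n (dim_col A)))"
    then show "(A * transpose_mat (all_ones_mat n (dim_col A))) $$ (i, j) =
         (B * transpose_mat (all_ones_mat n (dim_col A))) $$ (i, j)"
      using rs[of i] d by (simp add: all_ones_mat_def scalar_prod_def lessThan_atLeast0 row_def col_def)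
  qed (use d in auto)
  show "transpose_mat A * all_ones_mat (dim_row A) n = transpose_mat B * all_ones_mat (dim_row A) n"
  proof (rule eq_matI)
    fix i j assume ij: "i < dim_row (transpose_mat B * all_ones_mat (dim_row A) n)"
      "j < dim_col (transpose_mat B * all_ones_mat (dim_row A) n)"
    then show "(transpose_mat A * all_ones_mat (dim_row A) n) $$ (i, j) =
         (transpose_mat B * all_ones_mat (dim_row A) n) $$ (i, j)"
      using cs[of i] d by (simp add: all_ones_mat_def scalar_prod_def lessThan_atLeast0 row_def col_def)
  qed (use d in auto)
qed


lemma gen:
  assumes g1: "gram_mates A1 B1" and g2: "gram_mates A2 B2"
    and X: "X \<in> carrier_mat (dim_row A1) (dim_col A2)" and Y: "Y \<in> carrier_mat (dim_row A2) (dim_col A1)"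
    and zX: "zero_one_mat X" and zY: "zero_one_mat Y"
    and c1: "A1 * transpose_mat Y = B1 * transpose_mat Y"
    and c2: "X * transpose_mat A2 = X * transpose_mat B2"
    and c3: "transpose_mat A1 * X = transpose_mat B1 * X"
    and c4: "transpose_mat Y * A2 = transpose_mat Y * B2"
  shows "gram_mates (four_block_mat A1 X Y A2) (four_block_mat B1 X Y B2)"
proof -
  from g1 have d1: "dim_row A1 = dim_row B1" "dim_col A1 = dim_col B1" and z1: "zero_one_mat A1" "zero_one_mat B1"
    and e1: "A1 * transpose_mat A1 = B1 * transpose_mat B1" "transpose_mat A1 * A1 = transpose_mat B1 * B1"
    and n1: "A1 \<noteq> B1"
    unfolding gram_mates_def by auto
  from g2 have d2: "dim_row A2 = dim_row B2" "dim_col A2 = dim_col B2" and z2: "zero_one_mat A2" "zero_one_mat B2"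
    and e2: "A2 * transpose_mat A2 = B2 * transpose_mat B2" "transpose_mat A2 * A2 = transpose_mat B2 * B2"
    and n2: "A2 \<noteq> B2"
    unfolding gram_mates_def by auto
  define r1 c1 r2 c2 where "r1 = dim_row A1" "c1 = dim_col A1" "r2 = dim_row A2" "c2 = dim_col A2"
  have A1: "A1 \<in> carrier_mat r1 c1" and B1: "B1 \<in> carrier_mat r1 c1"
    and A2: "A2 \<in> carrier_mat r2 c2" and B2: "B2 \<in> carrier_mat r2 c2"
    using d1 d2 unfolding r1_c1_r2_c2_def by auto
  have X': "X \<in> carrier_mat r1 c2" and Y': "Y \<in> carrier_mat r2 c1" using X Y r1_c1_r2_c2_def by auto
  have tA1: "transpose_mat A1 \<in> carrier_mat c1 r1" and tB1: "transpose_mat B1 \<in> carrier_mat c1 r1"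
   and tA2: "transpose_mat A2 \<in> carrier_mat c2 r2" and tB2: "transpose_mat B2 \<in> carrier_mat c2 r2"
   and tX: "transpose_mat X \<in> carrier_mat c2 r1" and tY: "transpose_mat Y \<in> carrier_mat c1 r2"
    using A1 B1 A2 B2 X' Y' by auto
  have c2': "A2 * transpose_mat X = B2 * transpose_mat X"
    using arg_cong[OF c2, of transpose_mat] X' A2 B2 by (simp add: transpose_mult)
  have c3': "transpose_mat X * A1 = transpose_mat X * B1"
    using arg_cong[OF c3, of transpose_mat] X' A1 B1 by (simp add: transpose_mult)
  have c1': "Y * transpose_mat A1 = Y * transpose_mat B1"
    using arg_cong[OF c1, of transpose_mat] Y' A1 B1 by (simp add: transpose_mult)
  have c4': "transpose_mat A2 * Y = transpose_mat B2 * Y"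
    using arg_cong[OF c4, of transpose_mat] Y' A2 B2 by (simp add: transpose_mult)
  have P1: "four_block_mat A1 X Y A2 * transpose_mat (four_block_mat A1 X Y A2)
      = four_block_mat B1 X Y B2 * transpose_mat (four_block_mat B1 X Y B2)"
    apply (subst transpose_four_block_mat[OF A1 X' Y' A2])
    apply (subst transpose_four_block_mat[OF B1 X' Y' B2])
    apply (subst mult_four_block_mat[OF A1 X' Y' A2 tA1 tY tX tA2])
    apply (subst mult_four_block_mat[OF B1 X' Y' B2 tB1 tY tX tB2])
    using e1 e2 c1 c2 c1' c2' by simp
  have P2: "transpose_mat (four_block_mat A1 X Y A2) * four_block_mat A1 X Y A2
      = transpose_mat (four_block_mat B1 X Y B2) * four_block_mat B1 X Y B2"
    apply (subst transpose_four_block_mat[OF A1 X' Y' A2])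
    apply (subst transpose_four_block_mat[OF B1 X' Y' B2])
    apply (subst mult_four_block_mat[OF tA1 tY tX tA2 A1 X' Y' A2])
    apply (subst mult_four_block_mat[OF tB1 tY tX tB2 B1 X' Y' B2])
    using e1 e2 c3 c4 c3' c4' by simp
  have Z: "zero_one_mat (four_block_mat P X Y Q)" if "P \<in> carrier_mat r1 c1" "Q \<in> carrier_mat r2 c2"
    "zero_one_mat P" "zero_one_mat Q" for P Q
    using that X' Y' zX zY unfolding zero_one_mat_def by auto
  have N: "four_block_mat A1 X Y A2 \<noteq> four_block_mat B1 X Y B2"
  proof
    assume eq: "four_block_mat A1 X Y A2 = four_block_mat B1 X Y B2"
    have "A1 = B1"
    proof (rule eq_matI)
      fix i j assume "i < dim_row B1" "j < dim_col B1"
      then show "A1 $$ (i,j) = B1 $$ (i,j)"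
        using arg_cong[OF eq, of "\<lambda>M. M $$ (i,j)"] A1 B1 A2 B2 by auto
    qed (use A1 B1 in auto)
    with n1 show False by simp
  qed
  show ?thesis unfolding gram_mates_def
    using P1 P2 N Z[OF A1 A2 z1(1) z2(1)] Z[OF B1 B2 z1(2) z2(2)] A1 B1 A2 B2 by auto
qed


theorem proposition5p2:
  fixes A1 B1 A2 B2 :: "int mat"
  assumes "gram_mates A1 B1" and "gram_mates A2 B2"
  shows "gram_mates
           (four_block_mat A1 (0\<^sub>m (dim_row A1) (dim_col A2)) (0\<^sub>m (dim_row A2) (dim_col A1)) A2)
           (four_block_mat B1 (0\<^sub>m (dim_row B1) (dim_col B2)) (0\<^sub>m (dim_row B2) (dim_col B1)) B2)
       \<and> gram_mates
           (four_block_mat A1 (all_ones_mat (dim_row A1) (dim_col A2)) (all_ones_mat (dim_row A2) (dim_col A1)) A2)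
           (four_block_mat B1 (all_ones_mat (dim_row B1) (dim_col B2)) (all_ones_mat (dim_row B2) (dim_col B1)) B2)"
proof -
  from assms have d: "dim_row A1 = dim_row B1" "dim_col A1 = dim_col B1"
    "dim_row A2 = dim_row B2" "dim_col A2 = dim_col B2"
    unfolding gram_mates_def by auto
  have g0: "gram_mates
           (four_block_mat A1 (0\<^sub>m (dim_row A1) (dim_col A2)) (0\<^sub>m (dim_row A2) (dim_col A1)) A2)
           (four_block_mat B1 (0\<^sub>m (dim_row A1) (dim_col A2)) (0\<^sub>m (dim_row A2) (dim_col A1)) B2)"
  proof (rule gen[OF assms])
    show "A1 * transpose_mat (0\<^sub>m (dim_row A2) (dim_col A1)) = B1 * transpose_mat (0\<^sub>m (dim_row A2) (dim_col A1))"
      using d(1,2) by (metis right_mult_zero_mat' zero_transpose_mat)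
    show "0\<^sub>m (dim_row A1) (dim_col A2) * transpose_mat A2 = 0\<^sub>m (dim_row A1) (dim_col A2) * transpose_mat B2"
      using d(3,4) by (metis left_mult_zero_mat' index_transpose_mat(2) index_transpose_mat(3))
    show "transpose_mat A1 * 0\<^sub>m (dim_row A1) (dim_col A2) = transpose_mat B1 * 0\<^sub>m (dim_row A1) (dim_col A2)"
      using d(1,2) by (metis right_mult_zero_mat' index_transpose_mat(2) index_transpose_mat(3))
    show "transpose_mat (0\<^sub>m (dim_row A2) (dim_col A1)) * A2 = transpose_mat (0\<^sub>m (dim_row A2) (dim_col A1)) * B2"
      using d(3,4) by (metis left_mult_zero_mat' zero_transpose_mat)
  qed (simp_all add: zero_one_mat_def)
  let ?X = "all_ones_mat (dim_row A1) (dim_col A2)" and ?Y = "all_ones_mat (dim_row A2) (dim_col A1)"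
  have XC: "?X \<in> carrier_mat (dim_row A1) (dim_col A2)" and YC: "?Y \<in> carrier_mat (dim_row A2) (dim_col A1)"
    by (auto simp: all_ones_mat_def)
  have B2C: "B2 \<in> carrier_mat (dim_row A2) (dim_col A2)"
    by (rule carrier_matI[OF d(3)[symmetric] d(4)[symmetric]])
  have gJ: "gram_mates (four_block_mat A1 ?X ?Y A2) (four_block_mat B1 ?X ?Y B2)"
  proof (rule gen[OF assms XC YC])
    show "A1 * transpose_mat ?Y = B1 * transpose_mat ?Y" by (rule rows_J(1)[OF assms(1)])
    have "A2 * transpose_mat ?X = B2 * transpose_mat ?X" by (rule rows_J(1)[OF assms(2)])
    moreover have "transpose_mat (A2 * transpose_mat ?X) = ?X * transpose_mat A2"
      using transpose_mult[OF _ transpose_carrier_mat[THEN iffD2, OF XC], of A2 "dim_row A2"] by auto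
    moreover have "transpose_mat (B2 * transpose_mat ?X) = ?X * transpose_mat B2"
      using transpose_mult[OF B2C transpose_carrier_mat[THEN iffD2, OF XC]] by (simp only: transpose_transpose)
    ultimately show "?X * transpose_mat A2 = ?X * transpose_mat B2" by (metis (no_types))
    show "transpose_mat A1 * ?X = transpose_mat B1 * ?X" by (rule rows_J(2)[OF assms(1)])
    have "transpose_mat A2 * ?Y = transpose_mat B2 * ?Y" by (rule rows_J(2)[OF assms(2)])
    moreover have "transpose_mat (transpose_mat A2 * ?Y) = transpose_mat ?Y * A2"
      using transpose_mult[OF _ YC, of "transpose_mat A2" "dim_col A2"] by auto
    moreover have "transpose_mat (transpose_mat B2 * ?Y) = transpose_mat ?Y * B2"
      using transpose_mult[OF transpose_carrier_mat[THEN iffD2, OF B2C] YC] by (simp only: transpose_transpose)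
    ultimately show "transpose_mat ?Y * A2 = transpose_mat ?Y * B2" by (metis (no_types))
  qed (simp_all add: zero_one_mat_def all_ones_mat_def)
  show ?thesis using g0 gJ unfolding d by (rule conjI)
qed

end
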